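(* In the setting below, for all $\mu_1,\mu_2,\mu_3\in\mathbb F_q^A$, $$\big(\mathsf{CCZ}^{(q)}\big)^{\otimes M}\,|\overline{\mu_1}\rangle|\overline{\mu_2}\rangle|\overline{\mu_3}\rangle=(-1)^{\mathrm{tr}\left(\sum_{b\in B}(\mu_1)_b(\mu_2)_b(\mu_3)_b\right)}|\overline{\mu_1}\rangle|\overline{\mu_2}\rangle|\overline{\mu_3}\rangle,$$ where $(\mathsf{CCZ}^{(q)})^{\otimes M}$ applies $\mathsf{CCZ}^{(q)}$ to the three qudits at position $\alpha$ of the three blocks, for every $\alpha\in M$.
   Context: Let $q=2^l$ ($l\ge2$) and $\mathbb F_q$ the field with $q$ elements. Fix integers $k,m,s$ with $q/3\ge k\ge m\ge s>0$ and $2k\le q-m$. Fix $A\subseteq\mathbb F_q$ with $|A|=k$, $B\subseteq A$ with $|B|=s$, and let $M=\mathbb F_q\setminus B$. $\mathbb F_q[x]_{<d}$ denotes polynomials of degree $<d$, $\phi_M(P)=(P(\alpha))_{\alpha\in M}$, and $C_2^\perp=\phi_M(\{P\in\mathbb F_q[x]_{<m}:P(b)=0\ \forall b\in B\})$. For $a\in A$, $\ell_a(x)=\prod_{a'\in A\setminus\{a\}}\frac{x-a'}{a-a'}$; for $\mu\in\mathbb F_q^A$, $p_\mu=\sum_a\mu_a\ell_a$ and $c_\mu=\phi_M(p_\mu)$. A qudit has Hilbert space $\mathbb C^q$ with orthonormal basis $\{|x\rangle:x\in\mathbb F_q\}$. The trace $\mathrm{tr}:\mathbb F_q\to\mathbb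 F_2$ is $\mathrm{tr}(x)=\sum_{i=0}^{l-1}x^{2^i}$, and $\mathsf{CCZ}^{(q)}|x\rangle|y\rangle|z\rangle=(-1)^{\mathrm{tr}(xyz)}|x\rangle|y\rangle|z\rangle$. The codestate of $\mu$ is $|\overline{\mu}\rangle=|C_2^\perp|^{-1/2}\sum_{\alpha\in C_2^\perp}|c_\mu+\alpha\rangle\in(\mathbb C^q)^{\otimes M}$. *)

theory Defs
  imports Complex_Main "HOL-Computational_Algebra.Polynomial"
begin

text \<open>Field trace F_q -> F_2 (values 0 or 1 inside F_q), for q = 2^l.\<close>
definition tr :: "nat \<Rightarrow> 'a::field \<Rightarrow> 'a" where
  "tr l x = (\<Sum>i<l. x ^ (2 ^ i))"

definition sgn_tr :: "nat \<Rightarrow> 'a::field \<Rightarrow> complex" where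
  "sgn_tr l x = (if tr l x = 0 then 1 else -1)"

definition lagrange_basis :: "'a::field set \<Rightarrow> 'a \<Rightarrow> 'a poly" where
  "lagrange_basis A a = (\<Prod>a'\<in>A - {a}. smult (inverse (a - a')) [:- a', 1:])"

definition p_mu :: "'a::field set \<Rightarrow> ('a \<Rightarrow> 'a) \<Rightarrow> 'a poly" where
  "p_mu A \<mu> = (\<Sum>a\<in>A. smult (\<mu> a) (lagrange_basis A a))"

text \<open>Evaluation map phi_M; words are functions M -> F_q, extended by 0 outside M.\<close>
definition phi :: "'a::field set \<Rightarrow> 'a poly \<Rightarrow> ('a \<Rightarrow> 'a)" where
  "phi M P = (\<lambda>x. if x \<in> M then poly P x else 0)"

definition c_mu :: "'a::field set \<Rightarrow> 'a set \<Rightarrow> ('a \<Rightarrow> 'a) \<Rightarrow> ('a \<Rightarrow> 'a)" where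
  "c_mu M A \<mu> = phi M (p_mu A \<mu>)"

definition C2perp :: "'a::field set \<Rightarrow> 'a set \<Rightarrow> nat \<Rightarrow> ('a \<Rightarrow> 'a) set" where
  "C2perp M B m = phi M ` {P. degree P < m \<and> (\<forall>b\<in>B. poly P b = 0)}"

text \<open>A state of (C^q)^{tensor M}: amplitude function on words (basis states).
  Codestate of mu: |C|^{-1/2} sum_{alpha in C} |c_mu + alpha>.\<close>
definition codestate :: "'a::field set \<Rightarrow> 'a set \<Rightarrow> 'a set \<Rightarrow> nat \<Rightarrow> ('a \<Rightarrow> 'a)
    \<Rightarrow> (('a \<Rightarrow> 'a) \<Rightarrow> complex)" where
  "codestate M A B m \<mu> = (\<lambda>w. if w \<in> (\<lambda>\<alpha> x. c_mu M A \<mu> x + \<alpha> x) ` C2perp M B m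
      then complex_of_real (1 / sqrt (real (card (C2perp M B m)))) else 0)"

definition tensor3 :: "('w \<Rightarrow> complex) \<Rightarrow> ('w \<Rightarrow> complex) \<Rightarrow> ('w \<Rightarrow> complex)
    \<Rightarrow> ('w \<times> 'w \<times> 'w \<Rightarrow> complex)" where
  "tensor3 \<psi>1 \<psi>2 \<psi>3 = (\<lambda>(x, y, z). \<psi>1 x * \<psi>2 y * \<psi>3 z)"

definition CCZ_tensor :: "nat \<Rightarrow> 'a::field set
    \<Rightarrow> (('a \<Rightarrow> 'a) \<times> ('a \<Rightarrow> 'a) \<times> ('a \<Rightarrow> 'a) \<Rightarrow> complex)
    \<Rightarrow> (('a \<Rightarrow> 'a) \<times> ('a \<Rightarrow> 'a) \<times> ('a \<Rightarrow> 'a) \<Rightarrow> complex)" where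
  "CCZ_tensor l M \<Psi> = (\<lambda>(x, y, z). (\<Prod>\<alpha>\<in>M. sgn_tr l (x \<alpha> * y \<alpha> * z \<alpha>)) * \<Psi> (x, y, z))"

end

theory Submission
  imports Defs
begin


lemma card_zero_field: "of_nat (card (UNIV::'a::{field,finite} set)) = (0::'a)"
proof -
  have "(\<Sum>x\<in>UNIV. x) = (\<Sum>x\<in>UNIV. (x + 1::'a))"
    by (rule sum.reindex_bij_witness[where i="\<lambda>x. x + 1" and j="\<lambda>x. x - 1"]) auto
  also have "\<dots> = (\<Sum>x\<in>UNIV. x) + of_nat (card (UNIV::'a set))"
    by (simp add: sum.distrib)
  finally show ?thesis by (metis add_cancel_left_right)
qed

lemma char2:
  assumes "card (UNIV::'a::{field,finite} set) = 2 ^ l" "l \<ge> 1"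
  shows "(2::'a) = 0"
proof -
  have "(2::'a) ^ l = 0" using card_zero_field[where 'a='a] assms(1) by simp
  thus ?thesis by simp
qed

lemma pow_card:
  fixes x :: "'a::{field,finite}"
  shows "x ^ card (UNIV::'a set) = x"
proof (cases "x = 0")
  case True thus ?thesis by (simp add: zero_power finite_UNIV_card_ge_0)
next
  case False
  let ?S = "UNIV - {0::'a}"
  have "(\<Prod>y\<in>?S. y) = (\<Prod>y\<in>?S. x * y)"
    by (rule prod.reindex_bij_witness[where i="\<lambda>y. x * y" and j="\<lambda>y. y / x"]) (use False in auto)
  also have "\<dots> = x ^ card ?S * (\<Prod>y\<in>?S. y)"
    by (simp add: prod.distrib)
  finally have "x ^ card ?S = 1"
    by (simp add: prod_zero_iff)
  moreover have "card ?S = card (UNIV::'a set) - 1" by (simp add: card_Diff_subset)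
  moreover have "card (UNIV::'a set) \<ge> 1" using finite_UNIV_card_ge_0[where 'a='a] by simp
  ultimately have "x ^ (card (UNIV::'a set) - 1) = 1" by simp
  hence "x * x ^ (card (UNIV::'a set) - 1) = x" by simp
  thus ?thesis using \<open>card (UNIV::'a set) \<ge> 1\<close> by (simp add: power_Suc[symmetric])
qed

context
  fixes l :: nat
  assumes card: "card (UNIV::'a::{field,finite} set) = 2 ^ l" and l1: "l \<ge> 1"
begin

lemma two0: "(2::'a) = 0" using char2[OF card l1] .

lemma sq_add: "((a::'a) + b) ^ 2 = a ^ 2 + b ^ 2"
proof -
  have "(a + b) ^ 2 = a ^ 2 + b ^ 2 + 2 * a * b" by (simp add: power2_eq_square algebra_simps)
  thus ?thesis by (simp add: two0)
qed

lemma frob_add: "((a::'a) + b) ^ (2 ^ i) = a ^ (2 ^ i) + b ^ (2 ^ i)"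
proof (induction i)
  case 0 thus ?case by simp
next
  case (Suc i)
  have "(a + b) ^ (2 ^ Suc i) = ((a + b) ^ (2 ^ i)) ^ 2" by (simp add: power_mult[symmetric] mult.commute)
  also have "\<dots> = (a ^ (2 ^ i)) ^ 2 + (b ^ (2 ^ i)) ^ 2" by (simp add: Suc sq_add)
  also have "\<dots> = a ^ (2 ^ Suc i) + b ^ (2 ^ Suc i)" by (simp add: power_mult[symmetric] mult.commute)
  finally show ?case .
qed

lemma tr_add: "tr l ((a::'a) + b) = tr l a + tr l b"
  by (simp add: tr_def frob_add sum.distrib)

lemma sum_sq: "(\<Sum>i<n. (f i::'a)) ^ 2 = (\<Sum>i<n. f i ^ 2)" for n :: nat
  by (induct n) (simp_all add: sq_add)

lemma tr_01: "tr l (x::'a) = 0 \<or> tr l x = 1"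
proof -
  let ?t = "tr l x"
  have "?t ^ 2 = (\<Sum>i<l. x ^ (2 ^ Suc i))"
    by (simp add: tr_def sum_sq power_mult[symmetric] mult.commute)
  moreover have "x + (\<Sum>i<l. x ^ (2 ^ Suc i)) = ?t + x ^ (2 ^ l)"
    unfolding tr_def using sum.lessThan_Suc_shift[of "\<lambda>i. x ^ 2 ^ i" l]
    by (simp add: add.commute)
  moreover have "x ^ (2 ^ l) = x" using pow_card[of x] card by simp
  ultimately have "?t ^ 2 = ?t" by simp
  hence "?t * (?t - 1) = 0" by (simp add: power2_eq_square algebra_simps)
  thus ?thesis by auto
qed

lemma neg_eq: "- (a::'a) = a"
proof -
  have "a + a = 2 * a" by simp
  hence "a + a = 0" by (simp add: two0)
  thus ?thesis by (simp add: add_eq_0_iff)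
qed

lemma sgn_tr_add: "sgn_tr l (a::'a) * sgn_tr l b = sgn_tr l (a + b)"
proof -
  have "(1::'a) + 1 = 0" using two0 by (simp add: one_add_one)
  thus ?thesis using tr_01[of a] tr_01[of b] by (auto simp: sgn_tr_def tr_add)
qed

lemma sgn_tr_0: "sgn_tr l (0::'a) = 1"
  by (simp add: sgn_tr_def tr_def zero_power)

lemma sgn_tr_prod: "finite S \<Longrightarrow> (\<Prod>x\<in>S. sgn_tr l (f x::'a)) = sgn_tr l (\<Sum>x\<in>S. f x)"
  by (induction S rule: finite_induct) (simp_all add: sgn_tr_0 sgn_tr_add)

end


lemma powsum0:
  fixes j :: nat
  assumes "j < card (UNIV::'a::{field,finite} set) - 1"
  shows "(\<Sum>x\<in>(UNIV::'a set). x ^ j) = 0"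
proof (cases "j = 0")
  case True thus ?thesis using card_zero_field[where 'a='a] by simp
next
  case False
  let ?p = "monom (1::'a) j + [:-1:]"
  have dp: "degree ?p = j" using False by (subst degree_add_eq_left) (simp_all add: degree_monom_eq)
  hence "?p \<noteq> 0" using False by auto
  hence cr: "card {x. poly ?p x = 0} \<le> j" using card_poly_roots_bound dp by metis
  have "\<exists>c. c \<noteq> 0 \<and> c ^ j \<noteq> (1::'a)"
  proof (rule ccontr)
    assume "\<not> ?thesis"
    hence "UNIV - {0} \<subseteq> {x. poly ?p x = 0}" by (auto simp: poly_monom)
    hence "card (UNIV - {0::'a}) \<le> card {x. poly ?p x = 0}" by (intro card_mono) auto
    moreover have "card (UNIV - {0::'a}) = card (UNIV::'a set) - 1" by (simp add: card_Diff_subset)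
    ultimately show False using cr assms by linarith
  qed
  then obtain c :: 'a where c: "c \<noteq> 0" "c ^ j \<noteq> 1" by blast
  have "(\<Sum>x\<in>(UNIV::'a set). x ^ j) = (\<Sum>x\<in>UNIV. (c * x) ^ j)"
    by (rule sum.reindex_bij_witness[where i="\<lambda>y. c * y" and j="\<lambda>y. y / c"]) (use c in auto)
  also have "\<dots> = c ^ j * (\<Sum>x\<in>UNIV. x ^ j)" by (simp add: power_mult_distrib sum_distrib_left)
  finally have "(c ^ j - 1) * (\<Sum>x\<in>(UNIV::'a set). x ^ j) = 0" by (simp add: algebra_simps)
  thus ?thesis using c by simp
qed

lemma polysum0:
  fixes R :: "'a::{field,finite} poly"
  assumes "degree R < card (UNIV::'a set) - 1"
  shows "(\<Sum>x\<in>UNIV. poly R x) = 0"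
proof -
  have "(\<Sum>x\<in>UNIV. poly R x) = (\<Sum>x\<in>UNIV. \<Sum>i\<le>degree R. coeff R i * x ^ i)"
    by (simp add: poly_altdef)
  also have "\<dots> = (\<Sum>i\<le>degree R. coeff R i * (\<Sum>x\<in>UNIV. x ^ i))"
    by (subst sum.swap) (simp add: sum_distrib_left)
  also have "\<dots> = 0"
  proof (rule sum.neutral, rule ballI)
    fix i assume "i \<in> {..degree R}"
    hence "i < card (UNIV::'a set) - 1" using assms by auto
    thus "coeff R i * (\<Sum>x\<in>UNIV. x ^ i) = 0" by (simp add: powsum0)
  qed
  finally show ?thesis .
qed

lemma poly_lagrange:
  fixes A :: "'a::field set"
  assumes "finite A" "b \<in> A"
  shows "poly (p_mu A \<mu>) b = \<mu> b"
proof -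
  have L: "poly (lagrange_basis A a) b = (if a = b then 1 else 0)" if "a \<in> A" for a
  proof (cases "a = b")
    case True
    thus ?thesis unfolding lagrange_basis_def poly_prod
      by (simp, intro prod.neutral, auto simp: right_diff_distrib[symmetric] mult.commute[of b],
          metis eq_iff_diff_eq_0 left_inverse)
  next
    case False
    have "(\<Prod>k\<in>A - {a}. poly (smult (inverse (a - k)) [:- k, 1:]) b) = 0"
      by (rule prod_zero) (use assms False in auto)
    thus ?thesis unfolding lagrange_basis_def poly_prod using False by simp
  qed
  have "poly (p_mu A \<mu>) b = (\<Sum>a\<in>A. \<mu> a * (if a = b then 1 else 0))"
    unfolding p_mu_def poly_sum by (intro sum.cong) (simp_all add: L)
  also have "\<dots> = \<mu> b" using assms by (simp add: if_distrib cong: if_cong)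
  finally show ?thesis .
qed

lemma degree_p_mu:
  fixes A :: "'a::field set"
  assumes "finite A"
  shows "degree (p_mu A \<mu>) \<le> card A - 1"
  unfolding p_mu_def
proof (rule degree_sum_le[OF assms])
  fix a assume a: "a \<in> A"
  have "degree (lagrange_basis A a) \<le> sum (degree \<circ> (\<lambda>a'. smult (inverse (a - a')) [:- a', 1:])) (A - {a})"
    unfolding lagrange_basis_def using assms by (intro degree_prod_sum_le) auto
  also have "\<dots> \<le> sum (\<lambda>_. 1) (A - {a})"
    by (intro sum_mono) (simp add: degree_smult_le)
  also have "\<dots> = card A - 1" using a assms by simp
  finally show "degree (smult (\<mu> a) (lagrange_basis A a)) \<le> card A - 1"
    using degree_smult_le le_trans by blast
qed


theorem proposition5p10:
  fixes l k m s :: nat and A B M :: "'a::{field,finite} set"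
    and \<mu>1 \<mu>2 \<mu>3 :: "'a \<Rightarrow> 'a"
  assumes "card (UNIV :: 'a set) = 2 ^ l" and "l \<ge> 2"
    and "3 * k \<le> card (UNIV :: 'a set)" and "k \<ge> m" and "m \<ge> s" and "s > 0"
    and "2 * k \<le> card (UNIV :: 'a set) - m"
    and "card A = k" and "B \<subseteq> A" and "card B = s" and "M = UNIV - B"
  shows "CCZ_tensor l M (tensor3 (codestate M A B m \<mu>1) (codestate M A B m \<mu>2)
             (codestate M A B m \<mu>3))
       = (\<lambda>v. sgn_tr l (\<Sum>b\<in>B. \<mu>1 b * \<mu>2 b * \<mu>3 b)
             * tensor3 (codestate M A B m \<mu>1) (codestate M A B m \<mu>2)
                 (codestate M A B m \<mu>3) v)"
proof -
  have l1: "l \<ge> 1" using assms(2) by simp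
  note cardq = assms(1)
  have finA: "finite A" by simp
  define S where "S \<mu> = (\<lambda>\<alpha> x. c_mu M A \<mu> x + \<alpha> x) ` C2perp M B m" for \<mu>
  have degpQ: "degree (p_mu A \<mu> + Q) \<le> k - 1" if "degree Q < m" for \<mu> Q
  proof -
    have "degree (p_mu A \<mu>) \<le> k - 1" using degree_p_mu[OF finA] assms(8) by metis
    moreover have "degree Q \<le> k - 1" using that assms(4) by linarith
    ultimately show ?thesis using degree_add_le by blast
  qed
  have key: "(\<Prod>\<alpha>\<in>M. sgn_tr l (x \<alpha> * y \<alpha> * z \<alpha>)) = sgn_tr l (\<Sum>b\<in>B. \<mu>1 b * \<mu>2 b * \<mu>3 b)"
    if xS: "x \<in> S \<mu>1" "y \<in> S \<mu>2" "z \<in> S \<mu>3" for x y z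
  proof -
    obtain Q1 where Q1: "degree Q1 < m" "\<forall>b\<in>B. poly Q1 b = 0" "x = (\<lambda>w. c_mu M A \<mu>1 w + phi M Q1 w)"
      using xS(1) unfolding S_def C2perp_def by blast
    obtain Q2 where Q2: "degree Q2 < m" "\<forall>b\<in>B. poly Q2 b = 0" "y = (\<lambda>w. c_mu M A \<mu>2 w + phi M Q2 w)"
      using xS(2) unfolding S_def C2perp_def by blast
    obtain Q3 where Q3: "degree Q3 < m" "\<forall>b\<in>B. poly Q3 b = 0" "z = (\<lambda>w. c_mu M A \<mu>3 w + phi M Q3 w)"
      using xS(3) unfolding S_def C2perp_def by blast
    define R where "R = (p_mu A \<mu>1 + Q1) * (p_mu A \<mu>2 + Q2) * (p_mu A \<mu>3 + Q3)"
    have xyz: "x \<alpha> * y \<alpha> * z \<alpha> = poly R \<alpha>" if "\<alpha> \<in> M" for \<alpha>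
      using that by (simp add: Q1 Q2 Q3 R_def c_mu_def phi_def)
    have "degree R \<le> degree (p_mu A \<mu>1 + Q1) + degree (p_mu A \<mu>2 + Q2) + degree (p_mu A \<mu>3 + Q3)"
      unfolding R_def by (meson add_mono degree_mult_le le_trans order_refl)
    also have "\<dots> \<le> 3 * (k - 1)" using degpQ[OF Q1(1), of \<mu>1] degpQ[OF Q2(1), of \<mu>2] degpQ[OF Q3(1), of \<mu>3] by linarith
    finally have degR: "degree R < card (UNIV::'a set) - 1" using assms(3,4,5,6) by linarith
    have "(\<Sum>x\<in>UNIV. poly R x) = 0" using polysum0[OF degR] .
    moreover have "UNIV = M \<union> B" "M \<inter> B = {}" using assms(11) by auto
    ultimately have "(\<Sum>x\<in>M. poly R x) + (\<Sum>x\<in>B. poly R x) = 0"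
      by (metis finite sum.union_disjoint)
    hence "(\<Sum>x\<in>M. poly R x) = - (\<Sum>x\<in>B. poly R x)" by (simp add: eq_neg_iff_add_eq_0)
    also have "\<dots> = (\<Sum>x\<in>B. poly R x)" using neg_eq[OF cardq l1] .
    also have "\<dots> = (\<Sum>b\<in>B. \<mu>1 b * \<mu>2 b * \<mu>3 b)"
    proof (rule sum.cong)
      fix b assume b: "b \<in> B"
      hence "b \<in> A" using assms(9) by auto
      thus "poly R b = \<mu>1 b * \<mu>2 b * \<mu>3 b"
        using b Q1(2) Q2(2) Q3(2) by (simp add: R_def poly_lagrange[OF finA])
    qed simp
    finally have "(\<Sum>\<alpha>\<in>M. x \<alpha> * y \<alpha> * z \<alpha>) = (\<Sum>b\<in>B. \<mu>1 b * \<mu>2 b * \<mu>3 b)"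
      using xyz by simp
    thus ?thesis using sgn_tr_prod[OF cardq l1, of M "\<lambda>\<alpha>. x \<alpha> * y \<alpha> * z \<alpha>"] by simp
  qed
  show ?thesis
  proof (rule ext)
    fix v :: "('a \<Rightarrow> 'a) \<times> ('a \<Rightarrow> 'a) \<times> ('a \<Rightarrow> 'a)"
    obtain x y z where v: "v = (x, y, z)" by (cases v) auto
    show "CCZ_tensor l M (tensor3 (codestate M A B m \<mu>1) (codestate M A B m \<mu>2)
             (codestate M A B m \<mu>3)) v = sgn_tr l (\<Sum>b\<in>B. \<mu>1 b * \<mu>2 b * \<mu>3 b)
             * tensor3 (codestate M A B m \<mu>1) (codestate M A B m \<mu>2)
                 (codestate M A B m \<mu>3) v"
    proof (cases "x \<in> S \<mu>1 \<and> y \<in> S \<mu>2 \<and> z \<in> S \<mu>3")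
      case True
      thus ?thesis using key[of x y z] unfolding v CCZ_tensor_def tensor3_def by simp
    next
      case False
      thus ?thesis unfolding v CCZ_tensor_def tensor3_def codestate_def S_def by auto
    qed
  qed
qed

end
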